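(* Let $k\in\{1,2,\dots\}\cup\{\infty\}$. The group $D^k_{\mathrm{nb}}(\mathbb{R},0)$ is a normal subgroup of $H^k(\mathbb{R},0)$.
   Context: $H^k(\mathbb{R},0)$ is the group of homeomorphisms $h$ of $\mathbb{R}$ with $h(0)=0$ whose restriction to $\mathbb{R}\setminus\{0\}$ is a $C^k$-diffeomorphism of $\mathbb{R}\setminus\{0\}$. $D^k_{\mathrm{nb}}(\mathbb{R},0)$ is the group of $C^k$-diffeomorphisms of $\mathbb{R}$ that are the identity on some neighborhood of $0$. *)

theory Defs
  imports "HOL-Analysis.Analysis" "HOL-Algebra.Coset" "HOL-Library.Extended_Nat"
begin

definition Ck_on :: "enat \<Rightarrow> real set \<Rightarrow> (real \<Rightarrow> real) \<Rightarrow> bool" where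
  "Ck_on k S f \<longleftrightarrow>
     (\<forall>n::nat. enat n \<le> k \<longrightarrow> continuous_on S ((deriv ^^ n) f)) \<and>
     (\<forall>n::nat. enat n < k \<longrightarrow> (\<forall>x\<in>S. ((deriv ^^ n) f) differentiable (at x)))"

definition Ck_diffeo :: "enat \<Rightarrow> real set \<Rightarrow> (real \<Rightarrow> real) \<Rightarrow> bool" where
  "Ck_diffeo k U h \<longleftrightarrow> bij_betw h U U \<and> Ck_on k U h \<and> Ck_on k U (inv_into U h)"

definition Hk :: "enat \<Rightarrow> (real \<Rightarrow> real) \<Rightarrow> bool" where
  "Hk k h \<longleftrightarrow> (\<exists>g. homeomorphism UNIV UNIV h g) \<and> h 0 = 0 \<and> Ck_diffeo k (- {0}) h"

definition Dnb :: "enat \<Rightarrow> (real \<Rightarrow> real) \<Rightarrow> bool" where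
  "Dnb k h \<longleftrightarrow> Ck_diffeo k UNIV h \<and> (\<exists>e>0. \<forall>x. \<bar>x\<bar> < e \<longrightarrow> h x = x)"

definition Hk_group :: "enat \<Rightarrow> (real \<Rightarrow> real) monoid" where
  "Hk_group k = \<lparr>carrier = {h. Hk k h}, mult = (\<circ>), one = id\<rparr>"

end

theory Submission
  imports Defs
begin

fun Cn :: "nat \<Rightarrow> real set \<Rightarrow> (real \<Rightarrow> real) \<Rightarrow> bool" where
  "Cn 0 S f = continuous_on S f"
| "Cn (Suc n) S f = (continuous_on S f \<and> (\<forall>x\<in>S. f differentiable (at x)) \<and> Cn n S (deriv f))"

lemma rdiff_fdiff: "(f::real\<Rightarrow>real) differentiable (at x) \<longleftrightarrow> f field_differentiable (at x)"
  by (metis DERIV_deriv_iff_real_differentiable DERIV_deriv_iff_field_differentiable)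

lemma diff_cong_ev:
  fixes f g :: "real \<Rightarrow> real"
  assumes "eventually (\<lambda>y. f y = g y) (nhds x)" "f differentiable (at x)"
  shows "g differentiable (at x)"
proof -
  have "(f has_real_derivative deriv f x) (at x)"
    using assms(2) DERIV_deriv_iff_real_differentiable by blast
  then have "(g has_real_derivative deriv f x) (at x)"
    using DERIV_cong_ev[OF refl assms(1) refl] by blast
  then show ?thesis using real_differentiable_def by blast
qed

lemma Cn_cont: "Cn n S f \<Longrightarrow> continuous_on S f"
  by (cases n) auto

lemma Cn_char:
  "Cn n S f \<longleftrightarrow> (\<forall>m\<le>n. continuous_on S ((deriv ^^ m) f)) \<and>
     (\<forall>m<n. \<forall>x\<in>S. ((deriv ^^ m) f) differentiable (at x))"
proof (induction n arbitrary: f)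
  case 0
  then show ?case by simp
next
  case (Suc n)
  have A: "(\<forall>m\<le>Suc n. P m) \<longleftrightarrow> P 0 \<and> (\<forall>m\<le>n. P (Suc m))" for P
    using All_less_Suc2[of "Suc n" P] by (simp add: less_Suc_eq_le)
  have B: "(\<forall>m<Suc n. P m) \<longleftrightarrow> P 0 \<and> (\<forall>m<n. P (Suc m))" for P
    by (rule All_less_Suc2)
  have C: "(deriv ^^ Suc m) f = (deriv ^^ m) (deriv f)" for m
    by (rule funpow_Suc_right[THEN fun_cong, unfolded comp_def])
  show ?case
    unfolding Cn.simps Suc.IH A B C funpow_0 by blast
qed

lemma Ck_on_Cn: "Ck_on k S f \<longleftrightarrow> (\<forall>n. enat n \<le> k \<longrightarrow> Cn n S f)"
proof
  assume H: "Ck_on k S f"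
  show "\<forall>n. enat n \<le> k \<longrightarrow> Cn n S f"
  proof (intro allI impI)
    fix n assume "enat n \<le> k"
    then have "\<forall>m\<le>n. enat m \<le> k" "\<forall>m<n. enat m < k"
      by (metis enat_ord_simps(1) order.trans, metis enat_ord_simps(2) order.strict_trans2)
    then show "Cn n S f" using H unfolding Cn_char Ck_on_def by blast
  qed
next
  assume H: "\<forall>n. enat n \<le> k \<longrightarrow> Cn n S f"
  show "Ck_on k S f" unfolding Ck_on_def
  proof (intro conjI allI impI)
    fix n assume "enat n \<le> k" then show "continuous_on S ((deriv ^^ n) f)"
      using H Cn_char by blast
  next
    fix n assume "enat n < k"
    then have "enat (Suc n) \<le> k" by (simp add: Suc_ile_eq)
    then show "\<forall>x\<in>S. (deriv ^^ n) f differentiable at x"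
      using H Cn_char[of "Suc n"] by blast
  qed
qed

lemma Cn_mono: "Cn (Suc n) S f \<Longrightarrow> Cn n S f"
  by (induction n arbitrary: f) auto

lemma Cn_mono_le: "Cn n S f \<Longrightarrow> m \<le> n \<Longrightarrow> Cn m S f"
proof (induction n)
  case (Suc n)
  then show ?case by (metis Cn_mono le_Suc_eq)
qed simp

lemma Cn_subset: "Cn n S f \<Longrightarrow> T \<subseteq> S \<Longrightarrow> Cn n T f"
  by (induction n arbitrary: f) (auto intro: continuous_on_subset)

lemma Cn_cong:
  assumes "open S" "\<And>x. x \<in> S \<Longrightarrow> f x = g x" "Cn n S f"
  shows "Cn n S g"
  using assms(2,3)
proof (induction n arbitrary: f g)
  case 0
  then show ?case using continuous_on_cong by force
next
  case (Suc n)
  have ev: "eventually (\<lambda>y. f y = g y) (nhds x)" if "x \<in> S" for x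
    using Suc.prems(1) assms(1) that eventually_nhds by blast
  have "continuous_on S g" using Suc continuous_on_cong by force
  moreover have "\<forall>x\<in>S. g differentiable (at x)"
    using Suc.prems ev by (metis Cn.simps(2) diff_cong_ev)
  moreover have "Cn n S (deriv g)"
  proof -
    have "\<And>x. x \<in> S \<Longrightarrow> deriv f x = deriv g x" using ev deriv_cong_ev by blast
    then show ?thesis using Suc.IH[of "deriv f" "deriv g"] Suc.prems by simp
  qed
  ultimately show ?case by simp
qed

lemma Cn_Un:
  assumes "open A" "open B" "Cn n A f" "Cn n B f"
  shows "Cn n (A \<union> B) f"
  using assms(3,4)
  by (induction n arbitrary: f) (auto intro: continuous_on_open_Un assms)

lemma Cn_const: "Cn n S (\<lambda>x. c)"
  by (induction n arbitrary: c) auto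

lemma Cn_id: "Cn n S (\<lambda>x. x)"
  by (cases n) (auto simp: Cn_const)

lemma Cn_add:
  assumes "open S" "Cn n S f" "Cn n S g"
  shows "Cn n S (\<lambda>x. f x + g x)"
  using assms(2,3)
proof (induction n arbitrary: f g)
  case 0
  then show ?case by (auto intro: continuous_intros)
next
  case (Suc n)
  have "Cn n S (\<lambda>x. deriv f x + deriv g x)" using Suc by auto
  note X = this
  have "Cn n S (deriv (\<lambda>x. f x + g x))"
    by (rule Cn_cong[OF assms(1) _ X]) (use Suc.prems in \<open>simp add: rdiff_fdiff\<close>)
  moreover have "continuous_on S (\<lambda>x. f x + g x)"
    using Suc.prems by (simp add: continuous_on_add)
  moreover have "\<forall>x\<in>S. (\<lambda>x. f x + g x) differentiable (at x)"
    using Suc.prems by simp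
  ultimately show ?case by simp
qed

lemma Cn_mult:
  assumes "open S" "Cn n S f" "Cn n S g"
  shows "Cn n S (\<lambda>x. f x * g x)"
  using assms(2,3)
proof (induction n arbitrary: f g)
  case 0
  then show ?case by (auto intro: continuous_intros)
next
  case (Suc n)
  have "Cn n S (\<lambda>x. f x * deriv g x)"
    using Suc.IH[of f "deriv g"] Cn_mono[OF Suc.prems(1)] Suc.prems(2) by simp
  moreover have "Cn n S (\<lambda>x. deriv f x * g x)"
    using Suc.IH[of "deriv f" g] Cn_mono[OF Suc.prems(2)] Suc.prems(1) by simp
  ultimately have "Cn n S (\<lambda>x. f x * deriv g x + deriv f x * g x)"
    using Cn_add[OF assms(1)] by blast
  note X = this
  have "Cn n S (deriv (\<lambda>x. f x * g x))"
    by (rule Cn_cong[OF assms(1) _ X]) (use Suc.prems in \<open>simp add: rdiff_fdiff\<close>)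
  moreover have "continuous_on S (\<lambda>x. f x * g x)"
    using Suc.prems by (simp add: continuous_on_mult)
  moreover have "\<forall>x\<in>S. (\<lambda>x. f x * g x) differentiable (at x)"
    using Suc.prems by simp
  ultimately show ?case by simp
qed

lemma Cn_comp:
  assumes "open S" "open T" "Cn n S f" "Cn n T g" "f ` S \<subseteq> T"
  shows "Cn n S (g \<circ> f)"
  using assms(3,4,5)
proof (induction n arbitrary: f g)
  case 0
  then have "continuous_on (f ` S) g" "continuous_on S f"
    using continuous_on_subset[of T g "f ` S"] by auto
  then show ?case using continuous_on_compose by auto
next
  case (Suc n)
  have "Cn n S (deriv g \<circ> f)"
    using Suc.IH[of f "deriv g"] Cn_mono[OF Suc.prems(1)] Suc.prems(2,3) by (simp add: comp_def)
  then have "Cn n S (\<lambda>x. (deriv g \<circ> f) x * deriv f x)"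
    using Cn_mult[OF assms(1), of n "deriv g \<circ> f" "deriv f"] Suc.prems(1) by simp
  note X = this
  have "Cn n S (deriv (g \<circ> f))"
    by (rule Cn_cong[OF assms(1) _ X]) (use Suc.prems in \<open>simp add: real_derivative_chain image_subset_iff\<close>)
  moreover have "\<forall>x\<in>S. (g \<circ> f) differentiable (at x)"
    using Suc.prems by (simp add: differentiable_chain_at image_subset_iff)
  moreover have "continuous_on S (g \<circ> f)"
  proof -
    have "continuous_on (f ` S) g" "continuous_on S f"
      using continuous_on_subset[of T g "f ` S"] Suc.prems by auto
    then show ?thesis using continuous_on_compose by auto
  qed
  ultimately show ?case by (simp only: Cn.simps)
qed


lemma Ck_on_cong:
  assumes "open S" "\<And>x. x \<in> S \<Longrightarrow> f x = g x" "Ck_on k S f"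
  shows "Ck_on k S g"
  using assms Cn_cong unfolding Ck_on_Cn by blast

lemma Ck_on_comp:
  assumes "open S" "open T" "Ck_on k S f" "Ck_on k T g" "f ` S \<subseteq> T"
  shows "Ck_on k S (g \<circ> f)"
  using assms Cn_comp unfolding Ck_on_Cn by blast

lemma Ck_on_subset:
  assumes "Ck_on k S f" "T \<subseteq> S"
  shows "Ck_on k T f"
  using assms Cn_subset unfolding Ck_on_Cn by blast

lemma Ck_on_Un:
  assumes "open A" "open B" "Ck_on k A f" "Ck_on k B f"
  shows "Ck_on k (A \<union> B) f"
  using assms Cn_Un unfolding Ck_on_Cn by blast

lemma Ck_on_id: "Ck_on k S id"
  using Cn_id unfolding Ck_on_Cn id_def by blast

lemma Ck_on_cont: "Ck_on k S f \<Longrightarrow> continuous_on S f"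
  unfolding Ck_on_def by (metis funpow_0 zero_enat_def zero_le)

lemma Ck_diffeo_inv:
  assumes "open U" "Ck_diffeo k U h" "\<And>x. x \<in> U \<Longrightarrow> g x = inv_into U h x"
  shows "Ck_diffeo k U g"
proof -
  have b: "bij_betw h U U" "Ck_on k U h" "Ck_on k U (inv_into U h)"
    using assms(2) unfolding Ck_diffeo_def by auto
  have bg: "bij_betw g U U"
    using bij_betw_inv_into[OF b(1)] bij_betw_cong[of U g "inv_into U h" U] assms(3) by auto
  have cg: "Ck_on k U g"
    by (rule Ck_on_cong[OF assms(1) _ b(3)]) (simp add: assms(3))
  have eq: "inv_into U g y = h y" if "y \<in> U" for y
  proof (rule inv_into_f_eq)
    show "inj_on g U" using bg bij_betw_def by blast
    show "h y \<in> U" using b(1) that bij_betwE by blast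
    show "g (h y) = y" using assms(3)[of "h y"] \<open>h y \<in> U\<close> b(1) that
      by (simp add: bij_betw_def)
  qed
  have "Ck_on k U (inv_into U g)"
    by (rule Ck_on_cong[OF assms(1) _ b(2)]) (simp add: eq)
  then show ?thesis using bg cg unfolding Ck_diffeo_def by blast
qed

lemma Ck_diffeo_comp:
  assumes "open U" "Ck_diffeo k U f" "Ck_diffeo k U g"
  shows "Ck_diffeo k U (g \<circ> f)"
proof -
  have f: "bij_betw f U U" "Ck_on k U f" "Ck_on k U (inv_into U f)"
    using assms(2) unfolding Ck_diffeo_def by auto
  have g: "bij_betw g U U" "Ck_on k U g" "Ck_on k U (inv_into U g)"
    using assms(3) unfolding Ck_diffeo_def by auto
  have b: "bij_betw (g \<circ> f) U U" using bij_betw_trans f(1) g(1) by blast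
  have fU: "f ` U \<subseteq> U" "inv_into U g ` U \<subseteq> U"
    using f(1) g(1) bij_betw_imp_surj_on bij_betw_inv_into by blast+
  have c: "Ck_on k U (g \<circ> f)" using Ck_on_comp[OF assms(1) assms(1) f(2) g(2) fU(1)] .
  have eq: "inv_into U (g \<circ> f) y = (inv_into U f \<circ> inv_into U g) y" if "y \<in> U" for y
  proof (rule inv_into_f_eq)
    show "inj_on (g \<circ> f) U" using b bij_betw_def by blast
    have "inv_into U g y \<in> U" using fU(2) that by blast
    then show "(inv_into U f \<circ> inv_into U g) y \<in> U"
      using f(1) bij_betw_inv_into bij_betwE by (metis comp_apply)
    show "(g \<circ> f) ((inv_into U f \<circ> inv_into U g) y) = y"
      using \<open>inv_into U g y \<in> U\<close> that f(1) g(1)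
      by (simp add: bij_betw_def f_inv_into_f)
  qed
  have X: "Ck_on k U (inv_into U f \<circ> inv_into U g)"
    using Ck_on_comp[OF assms(1) assms(1) g(3) f(3) fU(2)] .
  have "Ck_on k U (inv_into U (g \<circ> f))"
    by (rule Ck_on_cong[OF assms(1) _ X]) (simp add: eq)
  then show ?thesis using b c unfolding Ck_diffeo_def by blast
qed

lemma Ck_diffeo_id:
  assumes "open U" shows "Ck_diffeo k U id"
proof -
  have "Ck_on k U (inv_into U id)"
    by (rule Ck_on_cong[OF assms _ Ck_on_id]) (simp add: inv_into_f_eq)
  then show ?thesis unfolding Ck_diffeo_def using Ck_on_id by auto
qed


lemma Ck_diffeo_restrict:
  assumes "open V" "V \<subseteq> U" "Ck_diffeo k U h" "bij_betw h V V"
  shows "Ck_diffeo k V h"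
proof -
  have b: "bij_betw h U U" "Ck_on k U h" "Ck_on k U (inv_into U h)"
    using assms(3) unfolding Ck_diffeo_def by auto
  have eq: "inv_into U h y = inv_into V h y" if "y \<in> V" for y
  proof (rule inv_into_f_eq)
    show "inj_on h U" using b(1) bij_betw_def by blast
    have yv: "y \<in> h ` V" using bij_betw_imp_surj_on[OF assms(4)] that by simp
    show "inv_into V h y \<in> U" using inv_into_into[OF yv] assms(2) by blast
    show "h (inv_into V h y) = y" by (rule f_inv_into_f[OF yv])
  qed
  have "Ck_on k V (inv_into V h)"
    by (rule Ck_on_cong[OF assms(1) eq Ck_on_subset[OF b(3) assms(2)]])
  then show ?thesis unfolding Ck_diffeo_def
    using assms(4) Ck_on_subset[OF b(2) assms(2)] by blast
qed

lemma open_punct: "open (- {0::real})"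
  by (simp add: open_Compl)

lemma Hk_inv:
  assumes "Hk k h" "homeomorphism UNIV UNIV h g"
  shows "Hk k g"
proof -
  have h: "\<forall>x. g (h x) = x" "\<forall>y. h (g y) = y" "h 0 = 0"
    using assms unfolding homeomorphism_def Hk_def by auto
  have D: "Ck_diffeo k (- {0}) h" using assms(1) Hk_def by blast
  then have inj: "inj_on h (- {0})" unfolding Ck_diffeo_def bij_betw_def by blast
  have "Ck_diffeo k (- {0}) g"
  proof (rule Ck_diffeo_inv[OF open_punct D])
    fix x :: real assume x: "x \<in> - {0}"
    have "g x \<noteq> 0" using h x by (metis ComplD singletonI)
    then show "g x = inv_into (- {0}) h x"
      using inv_into_f_eq[OF inj, of "g x" x] h by simp
  qed
  moreover have "g 0 = 0" using h by metis
  moreover have "homeomorphism UNIV UNIV g h" using assms(2) homeomorphism_sym by blast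
  ultimately show ?thesis unfolding Hk_def by blast
qed

lemma Hk_comp:
  assumes "Hk k h1" "Hk k h2"
  shows "Hk k (h1 \<circ> h2)"
proof -
  obtain g1 g2 where "homeomorphism UNIV UNIV h1 g1" "homeomorphism UNIV UNIV h2 g2"
    using assms Hk_def by blast
  then have "homeomorphism UNIV UNIV (h1 \<circ> h2) (g2 \<circ> g1)"
    using homeomorphism_compose by blast
  moreover have "Ck_diffeo k (- {0}) (h1 \<circ> h2)"
    using Ck_diffeo_comp[OF open_punct] assms Hk_def by blast
  moreover have "(h1 \<circ> h2) 0 = 0" using assms Hk_def by simp
  ultimately show ?thesis unfolding Hk_def by blast
qed

lemma Hk_id: "Hk k id"
proof -
  have "homeomorphism UNIV UNIV id id" using homeomorphism_ident unfolding id_def .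
  then show ?thesis unfolding Hk_def using Ck_diffeo_id[OF open_punct] by auto
qed

lemma Dnb_hom:
  assumes "Dnb k d"
  shows "homeomorphism UNIV UNIV d (inv_into UNIV d)"
proof -
  have b: "bij d" "Ck_on k UNIV d" "Ck_on k UNIV (inv_into UNIV d)"
    using assms unfolding Dnb_def Ck_diffeo_def by auto
  show ?thesis unfolding homeomorphism_def
    using b Ck_on_cont[OF b(2)] Ck_on_cont[OF b(3)]
    by (auto simp: bij_def surj_f_inv_f bij_betw_imp_surj_on[OF bij_betw_inv_into[OF b(1)]])
qed

lemma Dnb_0: "Dnb k d \<Longrightarrow> d 0 = 0"
  unfolding Dnb_def by auto

lemma Dnb_Hk:
  assumes "Dnb k d"
  shows "Hk k d"
proof -
  have b: "bij d" and D: "Ck_diffeo k UNIV d"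
    using assms unfolding Dnb_def Ck_diffeo_def by auto
  have d0: "d 0 = 0" using Dnb_0 assms by blast
  have "bij_betw d {0} {0}" using d0 by (simp add: bij_betw_def)
  then have "bij_betw d (UNIV - {0}) (UNIV - {0})"
    using bij_betw_DiffI[OF b] by blast
  then have "bij_betw d (- {0}) (- {0})" by (simp add: Compl_eq_Diff_UNIV)
  then have "Ck_diffeo k (- {0}) d"
    using Ck_diffeo_restrict[OF open_punct _ D] by blast
  then show ?thesis unfolding Hk_def using Dnb_hom[OF assms] d0 by blast
qed

lemma group_Hk: "group (Hk_group k)"
proof (rule groupI)
  fix x assume "x \<in> carrier (Hk_group k)"
  then have x: "Hk k x" by (simp add: Hk_group_def)
  then obtain g where g: "homeomorphism UNIV UNIV x g" using Hk_def by blast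
  have "Hk k g" using Hk_inv[OF x g] .
  moreover have "g \<circ> x = id" using g unfolding homeomorphism_def by (auto simp: fun_eq_iff)
  ultimately show "\<exists>y\<in>carrier (Hk_group k). y \<otimes>\<^bsub>Hk_group k\<^esub> x = \<one>\<^bsub>Hk_group k\<^esub>"
    by (auto simp: Hk_group_def)
qed (auto simp: Hk_group_def Hk_comp Hk_id comp_assoc)

lemma inv_Hk:
  assumes "Hk k h" "homeomorphism UNIV UNIV h g"
  shows "inv\<^bsub>Hk_group k\<^esub> h = g"
proof -
  have "Hk k g" using Hk_inv[OF assms] .
  moreover have "g \<circ> h = id" using assms(2) unfolding homeomorphism_def by (auto simp: fun_eq_iff)
  ultimately show ?thesis
    using group.inv_equality[OF group_Hk, of k g h] assms(1) by (simp add: Hk_group_def)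
qed


lemma Dnb_inv:
  assumes "Dnb k d"
  shows "Dnb k (inv_into UNIV d)"
proof -
  have D: "Ck_diffeo k UNIV d" and b: "bij d" using assms unfolding Dnb_def Ck_diffeo_def by auto
  obtain e where e: "e > 0" "\<forall>x. \<bar>x\<bar> < e \<longrightarrow> d x = x" using assms unfolding Dnb_def by blast
  have "Ck_diffeo k UNIV (inv_into UNIV d)"
    using Ck_diffeo_inv[OF open_UNIV D] by blast
  moreover have "\<forall>x. \<bar>x\<bar> < e \<longrightarrow> inv_into UNIV d x = x"
  proof (intro allI impI)
    fix x :: real assume "\<bar>x\<bar> < e"
    then have "d x = x" using e by blast
    then show "inv_into UNIV d x = x"
      using inv_into_f_eq[of d UNIV x x] b bij_def by blast
  qed
  ultimately show ?thesis unfolding Dnb_def using e(1) by blast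
qed

lemma Dnb_comp:
  assumes "Dnb k d1" "Dnb k d2"
  shows "Dnb k (d1 \<circ> d2)"
proof -
  obtain e1 where e1: "e1 > 0" "\<forall>x. \<bar>x\<bar> < e1 \<longrightarrow> d1 x = x" using assms unfolding Dnb_def by blast
  obtain e2 where e2: "e2 > 0" "\<forall>x. \<bar>x\<bar> < e2 \<longrightarrow> d2 x = x" using assms unfolding Dnb_def by blast
  have "Ck_diffeo k UNIV (d1 \<circ> d2)"
    using Ck_diffeo_comp[OF open_UNIV] assms unfolding Dnb_def by blast
  moreover have "\<forall>x. \<bar>x\<bar> < min e1 e2 \<longrightarrow> (d1 \<circ> d2) x = x"
    using e1 e2 by simp
  moreover have "min e1 e2 > 0" using e1 e2 by simp
  ultimately show ?thesis unfolding Dnb_def by blast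
qed

lemma Dnb_id: "Dnb k id"
  unfolding Dnb_def using Ck_diffeo_id[OF open_UNIV] by (auto intro: exI[of _ 1])

lemma conj_Ck:
  assumes h: "Hk k h" and hg: "homeomorphism UNIV UNIV h g" and d: "Dnb k d"
  shows "Ck_on k UNIV (h \<circ> d \<circ> g) \<and> (\<exists>r>0. \<forall>y. \<bar>y\<bar> < r \<longrightarrow> (h \<circ> d \<circ> g) y = y)"
proof -
  obtain e where e: "e > 0" "\<forall>x. \<bar>x\<bar> < e \<longrightarrow> d x = x" using d unfolding Dnb_def by blast
  have hgx: "\<forall>x. g (h x) = x" "\<forall>y. h (g y) = y" "continuous_on UNIV g"
    using hg unfolding homeomorphism_def by auto
  have h0: "h 0 = 0" using h Hk_def by blast
  have g0: "g 0 = 0" using hgx h0 by metis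
  have "open {y. \<bar>g y\<bar> < e}"
    by (rule open_Collect_less) (auto intro: continuous_intros hgx(3))
  moreover have "0 \<in> {y. \<bar>g y\<bar> < e}" using g0 e by simp
  ultimately obtain r where r: "r > 0" "ball 0 r \<subseteq> {y. \<bar>g y\<bar> < e}"
    using open_contains_ball by blast
  have near: "\<forall>y. \<bar>y\<bar> < r \<longrightarrow> (h \<circ> d \<circ> g) y = y"
  proof (intro allI impI)
    fix y :: real assume "\<bar>y\<bar> < r"
    then have "y \<in> ball 0 r" by simp
    then have "\<bar>g y\<bar> < e" using r by blast
    then show "(h \<circ> d \<circ> g) y = y" using e hgx by simp
  qed
  have c1: "Ck_on k (ball 0 r) (h \<circ> d \<circ> g)"
    by (rule Ck_on_cong[OF open_ball _ Ck_on_id]) (use near in simp)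
  have Hg: "Hk k g" using Hk_inv[OF h hg] .
  have cg: "Ck_on k (- {0}) g" using Hg unfolding Hk_def Ck_diffeo_def by blast
  have ch: "Ck_on k (- {0}) h" using h unfolding Hk_def Ck_diffeo_def by blast
  have Dd: "Ck_diffeo k (- {0}) d" using Dnb_Hk[OF d] unfolding Hk_def by blast
  then have cd: "Ck_on k (- {0}) d" and bd: "d ` (- {0}) \<subseteq> - {0}"
    unfolding Ck_diffeo_def using bij_betw_imp_surj_on by blast+
  have bg: "g ` (- {0}) \<subseteq> - {0}"
  proof
    fix z assume "z \<in> g ` (- {0})"
    then obtain y where "y \<noteq> 0" "z = g y" by auto
    then show "z \<in> - {0}" using hgx h0 by (metis ComplI singletonD)
  qed
  have "Ck_on k (- {0}) (d \<circ> g)" using Ck_on_comp[OF open_punct open_punct cg cd bg] .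
  moreover have "(d \<circ> g) ` (- {0}) \<subseteq> - {0}" using bd bg by (metis image_comp image_mono order_trans)
  ultimately have "Ck_on k (- {0}) (h \<circ> (d \<circ> g))" using Ck_on_comp[OF open_punct open_punct _ ch] by blast
  then have c2: "Ck_on k (- {0}) (h \<circ> d \<circ> g)" by (simp add: comp_assoc)
  have "Ck_on k (- {0} \<union> ball 0 r) (h \<circ> d \<circ> g)"
    using Ck_on_Un[OF open_punct open_ball c2 c1] .
  moreover have "- {0} \<union> ball 0 r = (UNIV :: real set)" using r by auto
  ultimately show ?thesis using near r by auto
qed

lemma Dnb_conj:
  assumes h: "Hk k h" and hg: "homeomorphism UNIV UNIV h g" and d: "Dnb k d"
  shows "Dnb k (h \<circ> d \<circ> g)"
proof -
  define d' where "d' = inv_into UNIV d"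
  have d': "Dnb k d'" using Dnb_inv[OF d] d'_def by simp
  have b: "bij d" using d unfolding Dnb_def Ck_diffeo_def by auto
  have dd: "\<forall>z. d (d' z) = z" "\<forall>z. d' (d z) = z"
    using b unfolding d'_def by (auto simp: bij_def surj_f_inv_f)
  have hgx: "\<forall>x. g (h x) = x" "\<forall>y. h (g y) = y"
    using hg unfolding homeomorphism_def by auto
  have i1: "(h \<circ> d \<circ> g) \<circ> (h \<circ> d' \<circ> g) = id" using dd hgx by (simp add: fun_eq_iff)
  have i2: "(h \<circ> d' \<circ> g) \<circ> (h \<circ> d \<circ> g) = id" using dd hgx by (simp add: fun_eq_iff)
  have bij: "bij (h \<circ> d \<circ> g)" using o_bij[OF i2 i1] .
  have inv: "inv_into UNIV (h \<circ> d \<circ> g) = h \<circ> d' \<circ> g" using inv_unique_comp[OF i1 i2] .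
  have "Ck_diffeo k UNIV (h \<circ> d \<circ> g)"
    unfolding Ck_diffeo_def inv using bij conj_Ck[OF h hg d] conj_Ck[OF h hg d'] by blast
  then show ?thesis unfolding Dnb_def using conj_Ck[OF h hg d] by blast
qed

theorem lemma5p7:
  fixes k :: enat
  assumes "k \<ge> 1"
  shows "normal {h. Dnb k h} (Hk_group k)"
proof -
  interpret G: group "Hk_group k" by (rule group_Hk)
  have sub: "subgroup {h. Dnb k h} (Hk_group k)"
  proof (rule G.subgroupI)
    show "{h. Dnb k h} \<subseteq> carrier (Hk_group k)" using Dnb_Hk by (auto simp: Hk_group_def)
    show "{h. Dnb k h} \<noteq> {}" using Dnb_id by blast
  next
    fix a assume "a \<in> {h. Dnb k h}"
    then have a: "Dnb k a" by simp
    have "inv\<^bsub>Hk_group k\<^esub> a = inv_into UNIV a"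
      using inv_Hk[OF Dnb_Hk[OF a] Dnb_hom[OF a]] .
    then show "inv\<^bsub>Hk_group k\<^esub> a \<in> {h. Dnb k h}" using Dnb_inv[OF a] by simp
  next
    fix a b assume "a \<in> {h. Dnb k h}" "b \<in> {h. Dnb k h}"
    then show "a \<otimes>\<^bsub>Hk_group k\<^esub> b \<in> {h. Dnb k h}" using Dnb_comp by (simp add: Hk_group_def)
  qed
  have "\<forall>x\<in>carrier (Hk_group k). \<forall>h\<in>{h. Dnb k h}.
      x \<otimes>\<^bsub>Hk_group k\<^esub> h \<otimes>\<^bsub>Hk_group k\<^esub> inv\<^bsub>Hk_group k\<^esub> x \<in> {h. Dnb k h}"
  proof (intro ballI)
    fix x h assume x: "x \<in> carrier (Hk_group k)" and hh: "h \<in> {h. Dnb k h}"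
    have xH: "Hk k x" using x by (simp add: Hk_group_def)
    then obtain g where g: "homeomorphism UNIV UNIV x g" using Hk_def by blast
    have "inv\<^bsub>Hk_group k\<^esub> x = g" using inv_Hk[OF xH g] .
    then show "x \<otimes>\<^bsub>Hk_group k\<^esub> h \<otimes>\<^bsub>Hk_group k\<^esub> inv\<^bsub>Hk_group k\<^esub> x \<in> {h. Dnb k h}"
      using Dnb_conj[OF xH g] hh by (simp add: Hk_group_def)
  qed
  then show ?thesis using G.normal_inv_iff sub by blast
qed

end
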